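(* Let $f\colon\boldsymbol{A}\to\boldsymbol{B}$ be a homomorphism between semilattices, $F$ a filter of $\boldsymbol{B}$, and $G\in\boldsymbol{A}_\ast$. If $f^{-1}[F]\subseteq G$ and the filter of $\boldsymbol{B}$ generated by $F\cup f[G]$ is disjoint from $f[A\smallsetminus G]$, then there exists $H\in\boldsymbol{B}_\ast$ such that $F\subseteq H$ and $G=f^{-1}[H]$.
   Context: A semilattice $\langle A;\land\rangle$ is ordered by $a\le b$ iff $a\land b=a$. A filter is a nonempty upset closed under binary meets. A filter is meet irreducible if it is proper and not the intersection of two filters both different from it. For a semilattice $\boldsymbol{A}$, $\boldsymbol{A}_\ast$ denotes the set (poset under inclusion) of meet irreducible filters of $\boldsymbol{A}$. *)

theory Defs
  imports Main
begin

text \<open>Semilattices are modelled as types of class semilattice_inf (meet = inf,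
  order a \<le> b iff inf a b = a). The carrier of the semilattice is UNIV.\<close>

definition sl_filter :: "'a::semilattice_inf set \<Rightarrow> bool" where
  "sl_filter F \<longleftrightarrow> F \<noteq> {} \<and> (\<forall>a b. a \<in> F \<and> a \<le> b \<longrightarrow> b \<in> F)
                    \<and> (\<forall>a b. a \<in> F \<and> b \<in> F \<longrightarrow> inf a b \<in> F)"

definition meet_irreducible_filter :: "'a::semilattice_inf set \<Rightarrow> bool" where
  "meet_irreducible_filter F \<longleftrightarrow> sl_filter F \<and> F \<noteq> UNIV \<and>
     (\<forall>G1 G2. sl_filter G1 \<and> sl_filter G2 \<and> F = G1 \<inter> G2 \<longrightarrow> G1 = F \<or> G2 = F)"

definition gen_filter :: "'a::semilattice_inf set \<Rightarrow> 'a set" where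
  "gen_filter S = \<Inter> {F. sl_filter F \<and> S \<subseteq> F}"

definition sl_hom :: "('a::semilattice_inf \<Rightarrow> 'b::semilattice_inf) \<Rightarrow> bool" where
  "sl_hom f \<longleftrightarrow> (\<forall>a b. f (inf a b) = inf (f a) (f b))"

end

theory Submission
  imports Defs
begin

lemma fup: "sl_filter F \<Longrightarrow> a \<in> F \<Longrightarrow> a \<le> b \<Longrightarrow> b \<in> F"
  unfolding sl_filter_def by blast
lemma finf: "sl_filter F \<Longrightarrow> a \<in> F \<Longrightarrow> b \<in> F \<Longrightarrow> inf a b \<in> F"
  unfolding sl_filter_def by blast
lemma fne: "sl_filter F \<Longrightarrow> F \<noteq> {}"
  unfolding sl_filter_def by blast
lemma fI: "F \<noteq> {} \<Longrightarrow> (\<And>a b. a \<in> F \<Longrightarrow> a \<le> b \<Longrightarrow> b \<in> F)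
   \<Longrightarrow> (\<And>a b. a \<in> F \<Longrightarrow> b \<in> F \<Longrightarrow> inf a b \<in> F) \<Longrightarrow> sl_filter F"
  unfolding sl_filter_def by blast

lemma gen_filter_filter:
  fixes S :: "'a::semilattice_inf set"
  assumes "S \<noteq> {}"
  shows "sl_filter (gen_filter S)" and "S \<subseteq> gen_filter S"
proof -
  show sub: "S \<subseteq> gen_filter S" unfolding gen_filter_def by blast
  show "sl_filter (gen_filter S)"
  proof (rule fI)
    show "gen_filter S \<noteq> {}" using sub assms by blast
  next
    fix a b assume "a \<in> gen_filter S" "a \<le> b"
    then show "b \<in> gen_filter S" unfolding gen_filter_def using fup by blast
  next
    fix a b assume "a \<in> gen_filter S" "b \<in> gen_filter S"
    then show "inf a b \<in> gen_filter S" unfolding gen_filter_def using finf by blast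
  qed
qed

lemma hom_mono:
  assumes "sl_hom f" "a \<le> b" shows "f a \<le> f b"
proof -
  have "f a = f (inf a b)" using assms(2) by (simp add: inf_absorb1)
  also have "\<dots> = inf (f a) (f b)" using assms(1) unfolding sl_hom_def by blast
  finally show ?thesis by (metis inf.cobounded2)
qed

lemma preimage_filter:
  assumes "sl_hom f" "sl_filter H" "f -` H \<noteq> {}"
  shows "sl_filter (f -` H)"
proof (rule fI)
  show "f -` H \<noteq> {}" by fact
next
  fix a b assume "a \<in> f -` H" "a \<le> b"
  then show "b \<in> f -` H" using hom_mono[OF assms(1)] fup[OF assms(2)] by blast
next
  fix a b assume "a \<in> f -` H" "b \<in> f -` H"
  then show "inf a b \<in> f -` H" using assms(1) finf[OF assms(2)] unfolding sl_hom_def by auto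
qed

theorem lemma3p6:
  fixes f :: "'a::semilattice_inf \<Rightarrow> 'b::semilattice_inf"
    and F :: "'b set" and G :: "'a set"
  assumes "sl_hom f"
    and "sl_filter F"
    and "meet_irreducible_filter G"
    and "f -` F \<subseteq> G"
    and "gen_filter (F \<union> f ` G) \<inter> f ` (UNIV - G) = {}"
  shows "\<exists>H. meet_irreducible_filter H \<and> F \<subseteq> H \<and> G = f -` H"
proof -
  have Gf: "sl_filter G" "G \<noteq> UNIV"
   and Girr: "\<And>G1 G2. sl_filter G1 \<Longrightarrow> sl_filter G2 \<Longrightarrow> G = G1 \<inter> G2 \<Longrightarrow> G1 = G \<or> G2 = G"
    using assms(3) unfolding meet_irreducible_filter_def by blast+
  have Gne: "G \<noteq> {}" using fne[OF Gf(1)] .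
  define S where "S = F \<union> f ` G"
  have Sne: "S \<noteq> {}" using Gne S_def by blast
  define \<A> where "\<A> = {H. sl_filter H \<and> S \<subseteq> H \<and> H \<inter> f ` (UNIV - G) = {}}"
  have "gen_filter S \<in> \<A>" using gen_filter_filter[OF Sne] assms(5) unfolding \<A>_def S_def by simp
  then have Ane: "\<A> \<noteq> {}" by blast
  have "\<exists>M\<in>\<A>. \<forall>X\<in>\<A>. M \<subseteq> X \<longrightarrow> X = M"
  proof (rule subset_Zorn_nonempty[OF Ane])
    fix C assume Cne: "C \<noteq> {}" and ch: "subset.chain \<A> C"
    have CA: "C \<subseteq> \<A>" and tot: "\<And>X Y. X \<in> C \<Longrightarrow> Y \<in> C \<Longrightarrow> X \<subseteq> Y \<or> Y \<subseteq> X"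
      using ch unfolding subset.chain_def by blast+
    have Cf: "\<And>X. X \<in> C \<Longrightarrow> sl_filter X" using CA unfolding \<A>_def by blast
    have CS: "\<And>X. X \<in> C \<Longrightarrow> S \<subseteq> X" using CA unfolding \<A>_def by blast
    have Cd: "\<And>X. X \<in> C \<Longrightarrow> X \<inter> f ` (UNIV - G) = {}" using CA unfolding \<A>_def by blast
    have "sl_filter (\<Union>C)"
    proof (rule fI)
      obtain X where "X \<in> C" using Cne by blast
      then show "\<Union>C \<noteq> {}" using fne[OF Cf] by blast
    next
      fix a b assume "a \<in> \<Union>C" "a \<le> b"
      then show "b \<in> \<Union>C" using fup[OF Cf] by blast
    next
      fix a b assume "a \<in> \<Union>C" "b \<in> \<Union>C"
      then obtain X Y where X: "X \<in> C" "a \<in> X" and Y: "Y \<in> C" "b \<in> Y" by blast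
      show "inf a b \<in> \<Union>C"
      proof (cases "X \<subseteq> Y")
        case True
        then have "inf a b \<in> Y" using X Y finf[OF Cf[OF Y(1)]] by blast
        then show ?thesis using Y by blast
      next
        case False
        then have "Y \<subseteq> X" using tot X Y by blast
        then have "inf a b \<in> X" using X Y finf[OF Cf[OF X(1)]] by blast
        then show ?thesis using X by blast
      qed
    qed
    moreover have "S \<subseteq> \<Union>C" using CS Cne by blast
    moreover have "\<Union>C \<inter> f ` (UNIV - G) = {}" using Cd by blast
    ultimately show "\<Union>C \<in> \<A>" unfolding \<A>_def by simp
  qed
  then obtain H where HA: "H \<in> \<A>" and Hmax: "\<And>X. X \<in> \<A> \<Longrightarrow> H \<subseteq> X \<Longrightarrow> X = H" by blast
  have Hf: "sl_filter H" and SH: "S \<subseteq> H" and Hdis: "H \<inter> f ` (UNIV - G) = {}"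
    using HA unfolding \<A>_def by blast+
  have GH: "G = f -` H"
  proof
    show "G \<subseteq> f -` H" using SH S_def by blast
    show "f -` H \<subseteq> G" using Hdis by blast
  qed
  obtain a0 where a0: "a0 \<notin> G" using Gf by blast
  have Hprop: "H \<noteq> UNIV" using Hdis a0 by blast
  have "meet_irreducible_filter H"
    unfolding meet_irreducible_filter_def
  proof (intro conjI allI impI Hf Hprop)
    fix H1 H2 assume asm: "sl_filter H1 \<and> sl_filter H2 \<and> H = H1 \<inter> H2"
    show "H1 = H \<or> H2 = H"
    proof (rule ccontr)
      assume nn: "\<not> (H1 = H \<or> H2 = H)"
      have s1: "H \<subseteq> H1" "H \<subseteq> H2" using asm by blast+
      have "H1 \<notin> \<A>" using Hmax s1 nn by blast
      then have "H1 \<inter> f ` (UNIV - G) \<noteq> {}" using asm s1 SH unfolding \<A>_def by auto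
      then obtain a1 where a1: "a1 \<notin> G" "f a1 \<in> H1" by blast
      have "H2 \<notin> \<A>" using Hmax s1 nn by blast
      then have "H2 \<inter> f ` (UNIV - G) \<noteq> {}" using asm s1 SH unfolding \<A>_def by auto
      then obtain a2 where a2: "a2 \<notin> G" "f a2 \<in> H2" by blast
      have p1: "sl_filter (f -` H1)" using preimage_filter[OF assms(1)] asm a1 by blast
      have p2: "sl_filter (f -` H2)" using preimage_filter[OF assms(1)] asm a2 by blast
      have "G = f -` H1 \<inter> f -` H2" using GH asm by auto
      then have "f -` H1 = G \<or> f -` H2 = G" using Girr p1 p2 by blast
      then show False using a1 a2 by blast
    qed
  qed
  moreover have "F \<subseteq> H" using SH S_def by blast
  ultimately show ?thesis using GH by blast
qed

end
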